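(* Let $n\ge1$ and let $\mathcal{G}=(\mathcal{V},\mathcal{E})$ be the multigraph with vertex set $\mathcal{V}=\{0,\ldots,n\}$ and, for each $i\in\{1,\ldots,n\}$, exactly two parallel edges $e_i^{(0)},e_i^{(1)}$ between vertex $0$ and vertex $i$ (and no other edges). Let $\epsilon,\delta\ge0$ and $\alpha\ge0$, and let $\mathcal{A}$ be an algorithm that is $(\epsilon,\delta)$-differentially private on $\mathcal{G}$ and that on every input $w:\mathcal{E}\to\{0,1\}$ produces a spanning tree whose weight is in expectation at most $\alpha$ greater than the minimum spanning tree weight. Then there exists a $(2\epsilon,(1+e^{\epsilon})\delta)$-differentially private algorithm $\mathcal{B}$ which on every input $x\in\{0,1\}^n$ produces $y\in\{0,1\}^n$ such that the expected Hamming distance $d_H(x,y)$ is at most $\alpha$.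
   Context: Private edge weight model: for a graph $\mathcal{G}=(\mathcal{V},\mathcal{E})$, a weight function is $w:\mathcal{E}\to\mathbb{R}$. Two weight functions $w,w'$ are neighboring if $\sum_{e\in\mathcal{E}}|w(e)-w'(e)|\le1$. A randomized algorithm $\mathcal{A}$ on weight functions is $(\epsilon,\delta)$-differentially private on $\mathcal{G}$ if for all neighboring $w,w'$ and all sets $S$ of outputs, $\Pr[\mathcal{A}(w)\in S]\le e^{\epsilon}\Pr[\mathcal{A}(w')\in S]+\delta$. A randomized algorithm $\mathcal{B}$ with inputs in $\{0,1\}^n$ is $(\epsilon',\delta')$-differentially private if for all $x,x'\in\{0,1\}^n$ differing in exactly one coordinate and all sets $S$ of outputs, $\Pr[\mathcal{B}(x)\in S]\le e^{\epsilon'}\Pr[\mathcal{B}(x')\in S]+\delta'$. $d_H$ denotes Hamming distance. *)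

theory Defs
  imports "HOL-Probability.Probability"
begin

definition edge_rel :: "('e \<Rightarrow> 'v \<times> 'v) \<Rightarrow> 'e set \<Rightarrow> ('v \<times> 'v) set" where
  "edge_rel ends T = {ends e | e. e \<in> T} \<union> {prod.swap (ends e) | e. e \<in> T}"

(* A spanning tree of a finite connected multigraph: a set of |V|-1 edges connecting all
   vertices (equivalently a connected acyclic spanning edge set; parallel edges count as a cycle). *)
definition spanning_tree :: "'v set \<Rightarrow> 'e set \<Rightarrow> ('e \<Rightarrow> 'v \<times> 'v) \<Rightarrow> 'e set \<Rightarrow> bool" where
  "spanning_tree V E ends T \<longleftrightarrow> T \<subseteq> E \<and> finite T \<and> card T + 1 = card V \<and>
     (\<forall>u\<in>V. \<forall>v\<in>V. (u, v) \<in> (edge_rel ends T)\<^sup>*)"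

definition tree_weight :: "('e \<Rightarrow> real) \<Rightarrow> 'e set \<Rightarrow> real" where
  "tree_weight w T = (\<Sum>e\<in>T. w e)"

definition mst_weight :: "'v set \<Rightarrow> 'e set \<Rightarrow> ('e \<Rightarrow> 'v \<times> 'v) \<Rightarrow> ('e \<Rightarrow> real) \<Rightarrow> real" where
  "mst_weight V E ends w = Min {tree_weight w T | T. spanning_tree V E ends T}"

(* The specific multigraph: vertices {0..n}; edge (i,b) for i in {1..n}, b in {0,1}
   (b encoded as bool) joins vertex 0 and vertex i. *)
definition Gv :: "nat \<Rightarrow> nat set" where "Gv n = {0..n}"
definition Ge :: "nat \<Rightarrow> (nat \<times> bool) set" where "Ge n = {1..n} \<times> UNIV"
definition Gends :: "nat \<times> bool \<Rightarrow> nat \<times> nat" where "Gends e = (0, fst e)"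

definition weight_fun :: "'e set \<Rightarrow> ('e \<Rightarrow> real) \<Rightarrow> bool" where
  "weight_fun E w \<longleftrightarrow> (\<forall>e. e \<notin> E \<longrightarrow> w e = 0)"

definition neighboring_w :: "'e set \<Rightarrow> ('e \<Rightarrow> real) \<Rightarrow> ('e \<Rightarrow> real) \<Rightarrow> bool" where
  "neighboring_w E w w' \<longleftrightarrow> (\<Sum>e\<in>E. \<bar>w e - w' e\<bar>) \<le> 1"

definition dp_on_graph :: "'e set \<Rightarrow> (('e \<Rightarrow> real) \<Rightarrow> 'o pmf) \<Rightarrow> real \<Rightarrow> real \<Rightarrow> bool" where
  "dp_on_graph E A \<epsilon> \<delta> \<longleftrightarrow>
     (\<forall>w w' S. weight_fun E w \<longrightarrow> weight_fun E w' \<longrightarrow> neighboring_w E w w' \<longrightarrow>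
        measure_pmf.prob (A w) S \<le> exp \<epsilon> * measure_pmf.prob (A w') S + \<delta>)"

(* bit vectors {0,1}^n, indexed by {1..n}, False outside *)
definition bitvecs :: "nat \<Rightarrow> (nat \<Rightarrow> bool) set" where
  "bitvecs n = {x. \<forall>i. i \<notin> {1..n} \<longrightarrow> \<not> x i}"

definition hamming :: "nat \<Rightarrow> (nat \<Rightarrow> bool) \<Rightarrow> (nat \<Rightarrow> bool) \<Rightarrow> nat" where
  "hamming n x y = card {i\<in>{1..n}. x i \<noteq> y i}"

definition dp_bits :: "nat \<Rightarrow> ((nat \<Rightarrow> bool) \<Rightarrow> 'o pmf) \<Rightarrow> real \<Rightarrow> real \<Rightarrow> bool" where
  "dp_bits n B \<epsilon> \<delta> \<longleftrightarrow>
     (\<forall>x x' S. x \<in> bitvecs n \<longrightarrow> x' \<in> bitvecs n \<longrightarrow> hamming n x x' = 1 \<longrightarrow>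
        measure_pmf.prob (B x) S \<le> exp \<epsilon> * measure_pmf.prob (B x') S + \<delta>)"

end

theory Submission
  imports Defs
begin

definition wx :: "nat \<Rightarrow> (nat \<Rightarrow> bool) \<Rightarrow> nat \<times> bool \<Rightarrow> real" where
  "wx n x e = (if e \<in> Ge n \<and> snd e \<noteq> x (fst e) then 1 else 0)"

definition fT :: "nat \<Rightarrow> (nat \<times> bool) set \<Rightarrow> nat \<Rightarrow> bool" where
  "fT n T = (\<lambda>i. i \<in> {1..n} \<and> (i, True) \<in> T)"

lemma reach_edge:
  assumes "(0, i) \<in> (edge_rel Gends T)\<^sup>*" "i \<noteq> 0"
  shows "\<exists>b. (i, b) \<in> T"
proof -
  from assms obtain a where "(a, i) \<in> edge_rel Gends T"
    by (metis rtranclE)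
  then obtain e where "e \<in> T" "(a, i) = Gends e \<or> (a, i) = prod.swap (Gends e)"
    unfolding edge_rel_def by auto
  then show ?thesis using assms(2) unfolding Gends_def
    by (metis fst_conv prod.collapse snd_conv swap_simp)
qed

lemma ham_le:
  assumes "spanning_tree (Gv n) (Ge n) Gends T"
  shows "real (hamming n x (fT n T)) \<le> tree_weight (wx n x) T"
proof -
  have T: "T \<subseteq> Ge n" "finite T" using assms unfolding spanning_tree_def by auto
  define D where "D = {i\<in>{1..n}. x i \<noteq> fT n T i}"
  have "(\<lambda>i. (i, \<not> x i)) ` D \<subseteq> {e\<in>T. wx n x e = 1}"
  proof
    fix e assume "e \<in> (\<lambda>i. (i, \<not> x i)) ` D"
    then obtain i where i: "i \<in> D" "e = (i, \<not> x i)" by auto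
    have "(0, i) \<in> (edge_rel Gends T)\<^sup>*" using assms i(1) unfolding spanning_tree_def D_def Gv_def by auto
    then obtain b where b: "(i, b) \<in> T" using reach_edge i(1) unfolding D_def by fastforce
    have "e \<in> T"
    proof (cases "x i")
      case True
      then have "(i, True) \<notin> T" using i(1) unfolding D_def fT_def by auto
      then show ?thesis using b i(2) True by (cases b) auto
    next
      case False
      then show ?thesis using i unfolding D_def fT_def by auto
    qed
    moreover have "e \<in> Ge n" using \<open>e \<in> T\<close> T by auto
    ultimately show "e \<in> {e\<in>T. wx n x e = 1}" using i(2) unfolding wx_def by auto
  qed
  moreover have "inj_on (\<lambda>i. (i, \<not> x i)) D" by (auto intro: inj_onI)
  ultimately have "card D \<le> card {e\<in>T. wx n x e = 1}"
    using T by (metis (no_types, lifting) card_image card_mono finite_subset mem_Collect_eq subsetI)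
  moreover have "real (card {e\<in>T. wx n x e = 1}) = (\<Sum>e\<in>{e\<in>T. wx n x e = 1}. wx n x e)"
    by simp
  moreover have "(\<Sum>e\<in>{e\<in>T. wx n x e = 1}. wx n x e) \<le> (\<Sum>e\<in>T. wx n x e)"
    by (rule sum_mono2) (use T in \<open>auto simp: wx_def\<close>)
  ultimately show ?thesis unfolding hamming_def tree_weight_def D_def
    by linarith
qed

lemma mst_le0:
  assumes "x \<in> bitvecs n"
  shows "mst_weight (Gv n) (Ge n) Gends (wx n x) \<le> 0"
proof -
  define T0 where "T0 = (\<lambda>i. (i, x i)) ` {1..n}"
  have "card T0 = n" unfolding T0_def by (subst card_image) (auto intro: inj_onI)
  moreover have "T0 \<subseteq> Ge n" unfolding T0_def Ge_def by auto
  moreover have conn0: "(0, v) \<in> (edge_rel Gends T0)\<^sup>*" if "v \<in> {0..n}" for v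
  proof (cases "v = 0")
    case False
    then have "(v, x v) \<in> T0" using that unfolding T0_def by auto
    then have "(0, v) \<in> edge_rel Gends T0" unfolding edge_rel_def Gends_def by force
    then show ?thesis by auto
  qed auto
  moreover have conn1: "(u, 0) \<in> (edge_rel Gends T0)\<^sup>*" if "u \<in> {0..n}" for u
  proof (cases "u = 0")
    case False
    then have "(u, x u) \<in> T0" using that unfolding T0_def by auto
    then have "(u, 0) \<in> edge_rel Gends T0" unfolding edge_rel_def Gends_def by force
    then show ?thesis by auto
  qed auto
  moreover have "finite T0" unfolding T0_def by auto
  ultimately have st: "spanning_tree (Gv n) (Ge n) Gends T0"
  proof -
    have "\<forall>u\<in>{0..n}. \<forall>v\<in>{0..n}. (u, v) \<in> (edge_rel Gends T0)\<^sup>*"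
    proof (intro ballI)
      fix u v assume "u \<in> {0..n}" "v \<in> {0..n}"
      from rtrancl_trans[OF conn1[OF this(1)] conn0[OF this(2)]]
      show "(u, v) \<in> (edge_rel Gends T0)\<^sup>*" .
    qed
    moreover have "card T0 + 1 = card {0..n}" using \<open>card T0 = n\<close> by simp
    ultimately show ?thesis unfolding spanning_tree_def Gv_def
      using \<open>T0 \<subseteq> Ge n\<close> \<open>finite T0\<close> by blast
  qed
  have tw: "tree_weight (wx n x) T0 = 0"
    unfolding tree_weight_def T0_def wx_def by (auto intro!: sum.neutral)
  have fin: "finite {tree_weight (wx n x) T | T. spanning_tree (Gv n) (Ge n) Gends T}"
  proof -
    have "{tree_weight (wx n x) T | T. spanning_tree (Gv n) (Ge n) Gends T}
          \<subseteq> tree_weight (wx n x) ` Pow (Ge n)"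
      unfolding spanning_tree_def by auto
    moreover have "finite (Ge n)" unfolding Ge_def by auto
    ultimately show ?thesis by (meson finite_Pow_iff finite_imageI finite_subset)
  qed
  show ?thesis unfolding mst_weight_def
    using Min_le[OF fin, of 0] st tw by force
qed

lemma finite_support:
  assumes "\<forall>T\<in>set_pmf p. spanning_tree (Gv n) (Ge n) Gends T"
  shows "finite (set_pmf p)"
proof -
  have "set_pmf p \<subseteq> Pow (Ge n)" using assms unfolding spanning_tree_def by auto
  moreover have "finite (Ge n)" unfolding Ge_def by auto
  ultimately show ?thesis by (meson finite_Pow_iff finite_subset)
qed

lemma Ge_fiber: "i0 \<in> {1..n} \<Longrightarrow> {e\<in>Ge n. fst e = i0} = {(i0, True), (i0, False)}"
  unfolding Ge_def
  apply (rule set_eqI)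
  subgoal for e by (cases e; cases "snd e") auto
  done

lemma half1: "\<bar>(a::real) - (a + b) / 2\<bar> = \<bar>a - b\<bar> / 2" by (simp add: abs_if field_simps)
lemma half2: "\<bar>((a::real) + b) / 2 - b\<bar> = \<bar>a - b\<bar> / 2" by (simp add: abs_if field_simps)

theorem lemmaB2:
  fixes n :: nat and \<epsilon> \<delta> \<alpha> :: real
    and A :: "(nat \<times> bool \<Rightarrow> real) \<Rightarrow> (nat \<times> bool) set pmf"
  assumes "n \<ge> 1" and "\<epsilon> \<ge> 0" and "\<delta> \<ge> 0" and "\<alpha> \<ge> 0"
    and "dp_on_graph (Ge n) A \<epsilon> \<delta>"
    and "\<And>w. weight_fun (Ge n) w \<Longrightarrow> w ` Ge n \<subseteq> {0, 1} \<Longrightarrow>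
            (\<forall>T\<in>set_pmf (A w). spanning_tree (Gv n) (Ge n) Gends T) \<and>
            measure_pmf.expectation (A w) (tree_weight w)
              \<le> mst_weight (Gv n) (Ge n) Gends w + \<alpha>"
  shows "\<exists>B :: (nat \<Rightarrow> bool) \<Rightarrow> (nat \<Rightarrow> bool) pmf.
           dp_bits n B (2 * \<epsilon>) ((1 + exp \<epsilon>) * \<delta>) \<and>
           (\<forall>x\<in>bitvecs n. set_pmf (B x) \<subseteq> bitvecs n \<and>
              measure_pmf.expectation (B x) (\<lambda>y. real (hamming n x y)) \<le> \<alpha>)"
proof -
  define B where "B = (\<lambda>x. map_pmf (fT n) (A (wx n x)))"
  have wf: "weight_fun (Ge n) (wx n x)" for x unfolding weight_fun_def wx_def by auto
  have w01: "wx n x ` Ge n \<subseteq> {0, 1}" for x unfolding wx_def by auto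
  note H = assms(6)[OF wf w01]
  show ?thesis
  proof (intro exI[of _ B] conjI ballI)
  show "dp_bits n B (2 * \<epsilon>) ((1 + exp \<epsilon>) * \<delta>)"
    unfolding dp_bits_def
  proof (intro allI impI)
    fix x x' S assume x: "x \<in> bitvecs n" and x': "x' \<in> bitvecs n" and h: "hamming n x x' = 1"
    from h obtain i0 where i0: "{i\<in>{1..n}. x i \<noteq> x' i} = {i0}"
      unfolding hamming_def by (meson card_1_singletonE)
    define wm where "wm = (\<lambda>e. (wx n x e + wx n x' e) / 2)"
    have wmf: "weight_fun (Ge n) wm" unfolding wm_def weight_fun_def wx_def by auto
    have diff: "\<bar>wx n x e - wx n x' e\<bar> = (if fst e = i0 then 1 else 0)" if "e \<in> Ge n" for e
    proof -
      obtain i b where e: "e = (i, b)" by fastforce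
      have "i \<in> {1..n}" using that e unfolding Ge_def by auto
      then show ?thesis using i0 that unfolding e wx_def by (cases b; force)
    qed
    have s: "(\<Sum>e\<in>Ge n. \<bar>wx n x e - wx n x' e\<bar>) = 2"
    proof -
      have "(\<Sum>e\<in>Ge n. \<bar>wx n x e - wx n x' e\<bar>) = (\<Sum>e\<in>Ge n. if fst e = i0 then 1 else 0)"
        using diff by (rule sum.cong[OF refl])
      also have "\<dots> = real (card {e\<in>Ge n. fst e = i0})"
        proof -
        have fG: "finite (Ge n)" unfolding Ge_def by simp
        show ?thesis using sum.inter_filter[OF fG, of "\<lambda>_. (1::real)" "\<lambda>e. fst e = i0"] by simp
      qed
      also have "{e\<in>Ge n. fst e = i0} = {(i0, True), (i0, False)}"
      proof -
        have "i0 \<in> {i\<in>{1..n}. x i \<noteq> x' i}" using i0 by simp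
        then have "i0 \<in> {1..n}" by simp
        then show ?thesis by (rule Ge_fiber)
      qed
      finally show ?thesis by simp
    qed
    have n1: "neighboring_w (Ge n) (wx n x) wm"
    proof -
      have "(\<Sum>e\<in>Ge n. \<bar>wx n x e - wm e\<bar>) = (\<Sum>e\<in>Ge n. \<bar>wx n x e - wx n x' e\<bar> / 2)"
        unfolding wm_def by (intro sum.cong refl) (rule half1)
      also have "\<dots> = 1" using s by (simp add: sum_divide_distrib[symmetric])
      finally show ?thesis unfolding neighboring_w_def by simp
    qed
    have n2: "neighboring_w (Ge n) wm (wx n x')"
    proof -
      have "(\<Sum>e\<in>Ge n. \<bar>wm e - wx n x' e\<bar>) = (\<Sum>e\<in>Ge n. \<bar>wx n x e - wx n x' e\<bar> / 2)"
        unfolding wm_def by (intro sum.cong refl) (rule half2)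
      also have "\<dots> = 1" using s by (simp add: sum_divide_distrib[symmetric])
      finally show ?thesis unfolding neighboring_w_def by simp
    qed
    let ?S = "fT n -` S"
    have p1: "measure_pmf.prob (A (wx n x)) ?S \<le> exp \<epsilon> * measure_pmf.prob (A wm) ?S + \<delta>"
      using assms(5) wf wmf n1 unfolding dp_on_graph_def by blast
    have p2: "measure_pmf.prob (A wm) ?S \<le> exp \<epsilon> * measure_pmf.prob (A (wx n x')) ?S + \<delta>"
      using assms(5) wf wmf n2 unfolding dp_on_graph_def by blast
    have "measure_pmf.prob (A (wx n x)) ?S
          \<le> exp \<epsilon> * (exp \<epsilon> * measure_pmf.prob (A (wx n x')) ?S + \<delta>) + \<delta>"
      proof -
      have "exp \<epsilon> * measure_pmf.prob (A wm) ?S \<le> exp \<epsilon> * (exp \<epsilon> * measure_pmf.prob (A (wx n x')) ?S + \<delta>)"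
        by (rule mult_left_mono[OF p2]) simp
      then show ?thesis using p1 by linarith
    qed
    also have "\<dots> = exp (2 * \<epsilon>) * measure_pmf.prob (A (wx n x')) ?S + (1 + exp \<epsilon>) * \<delta>"
    proof -
      have "exp (2 * \<epsilon>) = exp \<epsilon> * exp \<epsilon>" by (simp add: mult_exp_exp)
      then show ?thesis by (simp add: algebra_simps)
    qed
    finally show "measure_pmf.prob (B x) S \<le> exp (2 * \<epsilon>) * measure_pmf.prob (B x') S + (1 + exp \<epsilon>) * \<delta>"
      unfolding B_def by simp
    qed
  next
    fix x assume "x \<in> bitvecs n"
    show "set_pmf (B x) \<subseteq> bitvecs n" unfolding B_def bitvecs_def fT_def by auto
  next
    fix x assume x: "x \<in> bitvecs n"
    have fin: "finite (set_pmf (A (wx n x)))" using H[of x] finite_support by blast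
    have "measure_pmf.expectation (B x) (\<lambda>y. real (hamming n x y))
          = measure_pmf.expectation (A (wx n x)) (\<lambda>T. real (hamming n x (fT n T)))"
      unfolding B_def by simp
    also have "\<dots> \<le> measure_pmf.expectation (A (wx n x)) (tree_weight (wx n x))"
      by (intro integral_mono_AE integrable_measure_pmf_finite[OF fin] AE_pmfI ham_le)
         (use H[of x] in auto)
    also have "\<dots> \<le> \<alpha>" using H[of x] mst_le0[OF x] by linarith
    finally show "measure_pmf.expectation (B x) (\<lambda>y. real (hamming n x y)) \<le> \<alpha>" .
  qed
qed

end
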